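(* Let $\varphi$ be a metric-compatible function and $T\in\mathrm{Aut}(X,\mu)$ ergodic. Let $U\in[T]_\varphi$, $A\subseteq X$ measurable, and $(A_n)_{n\ge0}$ measurable subsets of $A$ with $\lim_n\mu(A\setminus A_n)=0$. Then $\lim_n d_{\varphi,T}(U_{A_n},U_A)=0$.
   Context: $(X,\mu)$ standard atomless probability space; $\mathrm{Aut}(X,\mu)$ measure-preserving transformations modulo null sets. For aperiodic $T$, $[T]$ is the set of $U\in\mathrm{Aut}(X,\mu)$ with $U(x)=T^{c_U(x)}(x)$ a.e. for a measurable $c_U:X\to\mathbb Z$. $\varphi:\mathbb R_+\to\mathbb R_+$ is metric-compatible if subadditive, non-decreasing, $\varphi(0)=0$, $\varphi(t)>0$ for $t>0$. $[T]_\varphi=\{U\in[T]:\int_X\varphi(|c_U|)d\mu<\infty\}$, $d_{\varphi,T}(U,V)=\int_X\varphi(|c_U(x)-c_V(x)|)d\mu$. The first return map $U_B$ to a measurable $B$ is $U_B(x)=U^{n(x)}(x)$, $n(x)=\min\{n\ge1:U^n(x)\in B\}$, for $x\in B$, and $U_B(x)=x$ for $x\notin B$. *)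

theory Defs
  imports "HOL-Probability.Probability"
begin

definition std_atomless_prob :: "('a::polish_space) measure \<Rightarrow> bool" where
  "std_atomless_prob M \<longleftrightarrow> prob_space M \<and> sets M = sets borel \<and>
     (\<forall>x. emeasure M {x} = 0)"

text \<open>Measure-preserving automorphisms (representatives of elements of Aut(X,mu)).\<close>
definition mp_aut :: "'a measure \<Rightarrow> ('a \<Rightarrow> 'a) \<Rightarrow> bool" where
  "mp_aut M T \<longleftrightarrow> bij_betw T (space M) (space M) \<and> T \<in> M \<rightarrow>\<^sub>M M \<and>
     inv_into (space M) T \<in> M \<rightarrow>\<^sub>M M \<and> distr M M T = M"

definition ergodic_aut :: "'a measure \<Rightarrow> ('a \<Rightarrow> 'a) \<Rightarrow> bool" where
  "ergodic_aut M T \<longleftrightarrow> mp_aut M T \<and>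
     (\<forall>A \<in> sets M. T -` A \<inter> space M = A \<longrightarrow> measure M A = 0 \<or> measure M A = 1)"

definition tpow :: "'a measure \<Rightarrow> ('a \<Rightarrow> 'a) \<Rightarrow> int \<Rightarrow> 'a \<Rightarrow> 'a" where
  "tpow M T k = (if 0 \<le> k then T ^^ nat k else (inv_into (space M) T) ^^ nat (- k))"

definition is_cocycle :: "'a measure \<Rightarrow> ('a \<Rightarrow> 'a) \<Rightarrow> ('a \<Rightarrow> 'a) \<Rightarrow> ('a \<Rightarrow> int) \<Rightarrow> bool" where
  "is_cocycle M T U c \<longleftrightarrow> c \<in> M \<rightarrow>\<^sub>M count_space UNIV \<and>
     (AE x in M. U x = tpow M T (c x) x)"

definition full_group :: "'a measure \<Rightarrow> ('a \<Rightarrow> 'a) \<Rightarrow> ('a \<Rightarrow> 'a) set" where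
  "full_group M T = {U. mp_aut M U \<and> (\<exists>c. is_cocycle M T U c)}"

text \<open>The cocycle c_U (unique a.e. for aperiodic T).\<close>
definition cocycle :: "'a measure \<Rightarrow> ('a \<Rightarrow> 'a) \<Rightarrow> ('a \<Rightarrow> 'a) \<Rightarrow> 'a \<Rightarrow> int" where
  "cocycle M T U = (SOME c. is_cocycle M T U c)"

definition metric_compatible :: "(real \<Rightarrow> real) \<Rightarrow> bool" where
  "metric_compatible \<phi> \<longleftrightarrow> \<phi> 0 = 0 \<and>
     (\<forall>s t. 0 \<le> s \<longrightarrow> 0 \<le> t \<longrightarrow> \<phi> (s + t) \<le> \<phi> s + \<phi> t) \<and>
     (\<forall>s t. 0 \<le> s \<longrightarrow> s \<le> t \<longrightarrow> \<phi> s \<le> \<phi> t) \<and>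
     (\<forall>t > 0. \<phi> t > 0)"

definition full_group_phi :: "'a measure \<Rightarrow> (real \<Rightarrow> real) \<Rightarrow> ('a \<Rightarrow> 'a) \<Rightarrow> ('a \<Rightarrow> 'a) set" where
  "full_group_phi M \<phi> T = {U \<in> full_group M T.
      (\<integral>\<^sup>+ x. ennreal (\<phi> \<bar>real_of_int (cocycle M T U x)\<bar>) \<partial>M) < \<infinity>}"

definition d_phi :: "'a measure \<Rightarrow> (real \<Rightarrow> real) \<Rightarrow> ('a \<Rightarrow> 'a) \<Rightarrow> ('a \<Rightarrow> 'a) \<Rightarrow> ('a \<Rightarrow> 'a) \<Rightarrow> ennreal" where
  "d_phi M \<phi> T U V = (\<integral>\<^sup>+ x. ennreal (\<phi> \<bar>real_of_int (cocycle M T U x - cocycle M T V x)\<bar>) \<partial>M)"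

definition first_return :: "('a \<Rightarrow> 'a) \<Rightarrow> 'a set \<Rightarrow> 'a \<Rightarrow> 'a" where
  "first_return U B x = (if x \<in> B \<and> (\<exists>n\<ge>1. (U ^^ n) x \<in> B)
      then (U ^^ (LEAST n. n \<ge> 1 \<and> (U ^^ n) x \<in> B)) x else x)"

end

theory Submission
  imports Defs
begin
lemma mp_funpow:
  assumes "f \<in> M \<rightarrow>\<^sub>M M" "distr M M f = M"
  shows "(f ^^ n) \<in> M \<rightarrow>\<^sub>M M \<and> distr M M (f ^^ n) = M"
proof (induction n)
  case 0 then show ?case by (simp add: id_def distr_id)
next
  case (Suc n)
  have m: "(f ^^ Suc n) = f \<circ> (f ^^ n)" by simp
  have "(f ^^ Suc n) \<in> M \<rightarrow>\<^sub>M M" unfolding m using Suc assms by (auto intro: measurable_comp)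
  moreover have "distr M M (f ^^ Suc n) = M"
  proof -
    have "distr M M (f ^^ Suc n) = distr (distr M M (f ^^ n)) M f"
      unfolding m using Suc assms by (subst distr_distr) auto
    then show ?thesis using Suc assms by simp
  qed
  ultimately show ?case by (simp only:)
qed

lemma AE_mp:
  assumes "f \<in> M \<rightarrow>\<^sub>M M" "distr M M f = M" "AE x in M. P x"
  shows "AE x in M. P (f x)"
proof -
  from assms(3) obtain N where N: "{x\<in>space M. \<not> P x} \<subseteq> N" "N \<in> sets M" "emeasure M N = 0"
    by (auto elim!: AE_E)
  have "emeasure M (f -` N \<inter> space M) = emeasure (distr M M f) N"
    using assms(1) N by (simp only: emeasure_distr)
  also have "\<dots> = 0" using assms(2) N by simp
  finally have "f -` N \<inter> space M \<in> null_sets M" using assms N by (auto intro: measurable_sets)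
  then show ?thesis
    by (rule AE_I') (use N measurable_space[OF assms(1)] in auto)
qed

locale setting =
  fixes M :: "('a::polish_space) measure" and T U :: "'a \<Rightarrow> 'a"
  assumes prob: "prob_space M" and sets_M: "sets M = sets borel"
    and mpT: "mp_aut M T" and mpU: "mp_aut M U"
begin

lemma space_M[simp]: "space M = UNIV"
  using sets_eq_imp_space_eq[OF sets_M] by simp

lemma bijT: "bij T" and bijU: "bij U"
  using mpT mpU unfolding mp_aut_def by auto

lemma T_meas[measurable]: "T \<in> M \<rightarrow>\<^sub>M M" and U_meas[measurable]: "U \<in> M \<rightarrow>\<^sub>M M"
  and Ti_meas[measurable]: "inv T \<in> M \<rightarrow>\<^sub>M M" and Ui_meas[measurable]: "inv U \<in> M \<rightarrow>\<^sub>M M"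
  and T_distr: "distr M M T = M" and U_distr: "distr M M U = M"
  using mpT mpU unfolding mp_aut_def by auto

lemma Tn: "(T ^^ n) \<in> M \<rightarrow>\<^sub>M M" "distr M M (T ^^ n) = M"
  using mp_funpow[OF T_meas T_distr] by auto
lemma Un: "(U ^^ n) \<in> M \<rightarrow>\<^sub>M M" "distr M M (U ^^ n) = M"
  using mp_funpow[OF U_meas U_distr] by auto

lemma meas_borel: "f \<in> M \<rightarrow>\<^sub>M M \<Longrightarrow> f \<in> borel_measurable M"
  using measurable_cong_sets[OF refl sets_M] by blast

lemma Tinv1[simp]: "T (inv T x) = x" "inv T (T x) = x"
  using bijT by (auto simp: bij_def surj_f_inv_f)
lemma Uinv1[simp]: "U (inv U x) = x" "inv U (U x) = x"
  using bijU by (auto simp: bij_def surj_f_inv_f)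

lemma Uinv_pow1[simp]: "(inv U ^^ n) ((U ^^ n) x) = x"
  by (induction n arbitrary: x) (simp, metis (no_types) comp_apply funpow.simps(2) funpow_Suc_right Uinv1(2))
lemma Uinv_pow2[simp]: "(U ^^ n) ((inv U ^^ n) x) = x"
  by (induction n arbitrary: x) (simp, metis (no_types) comp_apply funpow.simps(2) funpow_Suc_right Uinv1(1))

lemma Tinv_pow1[simp]: "(inv T ^^ n) ((T ^^ n) x) = x"
  by (induction n arbitrary: x) (simp, metis (no_types) comp_apply funpow.simps(2) funpow_Suc_right Tinv1(2))
lemma Tinv_pow2[simp]: "(T ^^ n) ((inv T ^^ n) x) = x"
  by (induction n arbitrary: x) (simp, metis (no_types) comp_apply funpow.simps(2) funpow_Suc_right Tinv1(1))

lemma Uinvn_meas[measurable]: "(inv U ^^ n) \<in> M \<rightarrow>\<^sub>M M"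
  by (induction n) (auto intro: measurable_comp)

lemma tpow_eq: "tpow M T k = (if 0 \<le> k then T ^^ nat k else inv T ^^ nat (- k))"
  unfolding tpow_def by simp

lemma tpow_suc: "tpow M T (k + 1) x = T (tpow M T k x)"
proof -
  consider "k \<ge> 0" | "k = -1" | "k \<le> -2" by linarith
  then show ?thesis
  proof cases
    case 1 then show ?thesis by (simp add: tpow_eq nat_add_distrib)
  next
    case 2 then show ?thesis by (simp add: tpow_eq)
  next
    case 3
    then have "nat (- k) = Suc (nat (- (k+1)))" by simp
    then show ?thesis using 3 by (simp add: tpow_eq)
  qed
qed

lemma tpow_pred: "tpow M T (k - 1) x = inv T (tpow M T k x)"
  using tpow_suc[of "k - 1" x] by simp

lemma tpow_add: "tpow M T (a + b) x = tpow M T a (tpow M T b x)"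
proof (induction a rule: int_induct[where k = 0])
  case base then show ?case by (simp add: tpow_eq)
next
  case (step1 i)
  have "tpow M T (i + 1 + b) x = tpow M T ((i + b) + 1) x" by (simp add: ac_simps)
  then show ?case using step1 by (simp add: tpow_suc)
next
  case (step2 i)
  have "tpow M T (i - 1 + b) x = tpow M T ((i + b) - 1) x" by (simp add: algebra_simps)
  then show ?case using step2 by (simp add: tpow_pred)
qed

lemma tpow_meas[measurable]: "tpow M T k \<in> M \<rightarrow>\<^sub>M M"
proof -
  have "(inv T ^^ n) \<in> M \<rightarrow>\<^sub>M M" for n by (induction n) (auto intro: measurable_comp)
  then show ?thesis using Tn by (simp add: tpow_eq)
qed

lemma tpow_periodic:
  assumes "tpow M T k x = x" "k \<noteq> 0"
  shows "\<exists>n\<ge>1. (T ^^ n) x = x"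
proof (cases "k > 0")
  case True then show ?thesis using assms by (intro exI[of _ "nat k"]) (auto simp: tpow_eq)
next
  case False
  then have "(inv T ^^ nat (-k)) x = x" using assms by (simp add: tpow_eq)
  then have "(T ^^ nat (-k)) x = x" by (metis Tinv_pow2)
  then show ?thesis using assms False by (intro exI[of _ "nat (-k)"]) auto
qed

end

lemma small_set:
  fixes M :: "('a::polish_space) measure"
  assumes "prob_space M" "sets M = sets borel" "\<And>x. emeasure M {x} = 0" "e > 0"
  shows "\<exists>B\<in>sets M. 0 < measure M B \<and> measure M B < e"
proof -
  interpret prob_space M by fact
  have sp: "space M = UNIV" using sets_eq_imp_space_eq[OF assms(2)] by simp
  have ballS: "ball x r \<in> sets M" for x r using assms(2) by simp
  have "\<exists>r>0. measure M (ball x r) < e" for x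
  proof -
    define A where "A i = ball x (1 / real (Suc i))" for i
    have dec: "decseq A" unfolding A_def decseq_def
      by (auto intro!: subset_ball frac_le)
    have "(\<Inter>i. A i) = {x}"
    proof (intro equalityI subsetI)
      fix y assume "y \<in> (\<Inter>i. A i)"
      then have h: "\<forall>i. dist x y < 1 / real (Suc i)" by (auto simp: A_def)
      have "dist x y \<le> 0"
      proof (rule ccontr)
        assume "\<not> dist x y \<le> 0"
        then obtain n where "1 / real (Suc n) < dist x y" using nat_approx_posE[of "dist x y"] by force
        with h show False by (meson less_asym)
      qed
      then show "y \<in> {x}" by simp
    qed (auto simp: A_def)
    then have "(\<lambda>i. emeasure M (A i)) \<longlonglongrightarrow> 0"
      using Lim_emeasure_decseq[of A M] dec ballS assms(3) by (auto simp: A_def)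
    then have "(\<lambda>i. measure M (A i)) \<longlonglongrightarrow> 0"
      unfolding measure_def using tendsto_enn2real[of "\<lambda>i. emeasure M (A i)" 0 sequentially] by simp
    then obtain i where "measure M (A i) < e"
    proof -
      from LIMSEQ_D[OF \<open>(\<lambda>i. measure M (A i)) \<longlonglongrightarrow> 0\<close> assms(4)] obtain N where
        "\<And>n. n \<ge> N \<Longrightarrow> norm (measure M (A n) - 0) < e" by blast
      from this[of N] show ?thesis using that by simp
    qed
    then show ?thesis unfolding A_def by (intro exI[of _ "1 / real (Suc i)"]) auto
  qed
  then obtain r where r: "\<And>x. r x > 0" "\<And>x. measure M (ball x (r x)) < e" by metis
  obtain F where F: "F \<subseteq> (\<lambda>x. ball x (r x)) ` UNIV" "countable F" "\<Union>F = \<Union>((\<lambda>x. ball x (r x)) ` UNIV)"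
    using Lindelof[of "(\<lambda>x. ball x (r x)) ` UNIV"] by auto
  have "\<Union>F = UNIV" using F(3) r(1) by (auto intro: centre_in_ball[THEN iffD2])
  have "\<exists>S\<in>F. S \<notin> null_sets M"
  proof (rule ccontr)
    assume "\<not> ?thesis"
    then have "(\<Union>S\<in>F. S) \<in> null_sets M" using F(2) by (intro null_sets_UN') auto
    then show False using \<open>\<Union>F = UNIV\<close> prob_space sp using emeasure_space_1 null_setsD1 by fastforce
  qed
  then obtain x where x: "ball x (r x) \<notin> null_sets M" using F(1) by auto
  then have "measure M (ball x (r x)) > 0"
    using ballS by (metis measure_nonneg emeasure_eq_measure less_eq_real_def null_setsI ennreal_0)
  then show ?thesis using r(2)[of x] ballS by blast
qed

context setting begin

lemma prob_M: "prob_space M" by (rule prob)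

lemma Pk_sets[measurable]: "{x. (T ^^ k) x = x} \<in> sets M"
proof -
  have "{x \<in> space M. (T ^^ k) x = id x} \<in> sets M"
    using Tn(1)[of k] by (intro measurable_equality_set) (auto intro: meas_borel simp: id_def)
  then show ?thesis by simp
qed

lemma preT_meas: "B \<in> sets M \<Longrightarrow> measure M ((T ^^ j) -` B) = measure M B"
proof -
  assume B: "B \<in> sets M"
  have "measure M ((T ^^ j) -` B \<inter> space M) = measure (distr M M (T ^^ j)) B"
    using Tn(1) B by (simp add: measure_distr)
  then show ?thesis using Tn(2) by simp
qed

lemma aperiodic:
  assumes erg: "ergodic_aut M T" and atom: "\<And>x. emeasure M {x} = 0" and k: "k \<ge> 1"
  shows "emeasure M {x. (T ^^ k) x = x} = 0"
proof (rule ccontr)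
  interpret prob_space M by (rule prob)
  define P where "P = {x. (T ^^ k) x = x}"
  have Ps: "P \<in> sets M" unfolding P_def by simp
  assume "emeasure M {x. (T ^^ k) x = x} \<noteq> 0"
  then have "measure M P \<noteq> 0" unfolding P_def using Ps emeasure_eq_measure P_def by auto
  have inv: "T -` P \<inter> space M = P"
  proof -
    have "(T ^^ k) (T x) = T ((T ^^ k) x)" for x by (simp add: funpow_swap1)
    moreover have "T a = T b \<longleftrightarrow> a = b" for a b using bijT by (auto simp: bij_def inj_eq)
    ultimately show ?thesis unfolding P_def by auto
  qed
  then have "measure M P = 1" using erg Ps \<open>measure M P \<noteq> 0\<close> unfolding ergodic_aut_def by blast
  obtain B where B: "B \<in> sets M" "0 < measure M B" "measure M B < 1 / real k"
    using small_set[OF prob sets_M atom, of "1 / real k"] k by auto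
  define S where "S = P \<inter> (\<Union>j<k. (T ^^ j) -` B)"
  have Bj: "(T ^^ j) -` B \<in> sets M" for j using measurable_sets[OF Tn(1) B(1)] by simp
  have Ss: "S \<in> sets M" unfolding S_def using Ps Bj by auto
  have Sinv: "T -` S \<inter> space M = S"
  proof -
    have "T x \<in> P \<longleftrightarrow> x \<in> P" for x using inv by auto
    moreover have "(\<exists>j<k. (T ^^ j) (T x) \<in> B) \<longleftrightarrow> (\<exists>j<k. (T ^^ j) x \<in> B)" if "x \<in> P" for x
    proof
      assume "\<exists>j<k. (T ^^ j) (T x) \<in> B"
      then obtain j where j: "j < k" "(T ^^ Suc j) x \<in> B" by (auto simp: funpow_Suc_right simp del: funpow.simps)
      show "\<exists>j<k. (T ^^ j) x \<in> B"
      proof (cases "Suc j = k")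
        case True then show ?thesis using j that k by (intro exI[of _ 0]) (auto simp: P_def)
      next
        case False then show ?thesis using j by (intro exI[of _ "Suc j"]) auto
      qed
    next
      assume "\<exists>j<k. (T ^^ j) x \<in> B"
      then obtain j where j: "j < k" "(T ^^ j) x \<in> B" by auto
      show "\<exists>j<k. (T ^^ j) (T x) \<in> B"
      proof (cases j)
        case 0
        have "(T ^^ (k - 1)) (T x) = (T ^^ k) x" using k
          by (metis Suc_diff_le diff_Suc_1 funpow_Suc_right o_apply)
        then show ?thesis using 0 j that k by (intro exI[of _ "k - 1"]) (auto simp: P_def)
      next
        case (Suc i) then show ?thesis using j
          by (intro exI[of _ i]) (auto simp: funpow_Suc_right simp del: funpow.simps)
      qed
    qed
    ultimately have "x \<in> T -` S \<longleftrightarrow> x \<in> S" for x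
      unfolding S_def vimage_def by (simp only: Int_iff UN_iff lessThan_iff mem_Collect_eq Bex_def) blast
    then show ?thesis by auto
  qed
  have "measure M S \<le> measure M (\<Union>j<k. (T ^^ j) -` B)"
    unfolding S_def using Bj by (intro finite_measure_mono) auto
  also have "\<dots> \<le> (\<Sum>j<k. measure M ((T ^^ j) -` B))"
    using Bj by (intro measure_UNION_le) auto
  also have "\<dots> = real k * measure M B" using preT_meas[OF B(1)] by simp
  also have "\<dots> < real k * (1 / real k)" using B(3) k by (intro mult_strict_left_mono) auto
  also have "\<dots> = 1" using k by simp
  finally have S1: "measure M S < 1" .
  have "measure M B \<le> measure M S"
  proof -
    have "measure M B = measure M (B \<inter> P)"
    proof -
      have "measure M (space M - P) = 1 - measure M P" using Ps by (rule prob_compl)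
      then have "measure M (space M - P) = 0" using \<open>measure M P = 1\<close> by simp
      moreover have "space M - P \<in> sets M" using sets.top Ps by (rule sets.Diff)
      ultimately have "space M - P \<in> null_sets M"
        by (intro null_setsI) (simp_all add: emeasure_eq_measure)
      moreover have "B - P \<in> sets M" using B(1) Ps by (rule sets.Diff)
      moreover have "B - P \<subseteq> space M - P" using sets.sets_into_space[OF B(1)] by (intro Diff_mono) auto
      ultimately have BP: "B - P \<in> null_sets M" by (rule null_sets_subset)
      have e: "B \<inter> P = B - (B - P)" by auto
      show ?thesis unfolding e by (rule measure_Diff_null_set[OF B(1) BP, symmetric])
    qed
    also have "\<dots> \<le> measure M S"
    proof (rule finite_measure_mono)
      show "B \<inter> P \<subseteq> S"
      proof
        fix x assume "x \<in> B \<inter> P"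
        moreover have "(0::nat) \<in> {..<k}" using k by simp
        moreover have "x \<in> (T ^^ 0) -` B" using \<open>x \<in> B \<inter> P\<close> by simp
        ultimately have "x \<in> (\<Union>j<k. (T ^^ j) -` B)" by (intro UN_I[of 0]) auto
        then show "x \<in> S" unfolding S_def using \<open>x \<in> B \<inter> P\<close> by blast
      qed
    qed (rule Ss)
    finally show ?thesis .
  qed
  then have "measure M S > 0" using B(2) by simp
  moreover have "measure M S = 0 \<or> measure M S = 1"
  proof -
    have "\<forall>A\<in>sets M. T -` A \<inter> space M = A \<longrightarrow> measure M A = 0 \<or> measure M A = 1"
      using erg unfolding ergodic_aut_def by (rule conjunct2)
    then show ?thesis using Ss Sinv by blast
  qed
  ultimately show False using S1 by linarith
qed

lemma AE_aperiodic:
  assumes erg: "ergodic_aut M T" and atom: "\<And>x. emeasure M {x} = 0"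
  shows "AE x in M. \<forall>k\<ge>1. (T ^^ k) x \<noteq> x"
proof -
  have "AE x in M. (T ^^ k) x \<noteq> x" if "k \<ge> 1" for k
    using aperiodic[OF erg atom that] by (intro AE_I'[of "{x. (T ^^ k) x = x}"]) auto
  then show ?thesis by (simp add: AE_all_countable)
qed

end

lemma int_meas_iff: "((f::'b \<Rightarrow> int) \<in> M \<rightarrow>\<^sub>M count_space UNIV) \<longleftrightarrow> (\<lambda>x. real_of_int (f x)) \<in> borel_measurable M"
proof
  assume "f \<in> M \<rightarrow>\<^sub>M count_space UNIV"
  then show "(\<lambda>x. real_of_int (f x)) \<in> borel_measurable M"
    by (rule measurable_compose) simp
next
  assume "(\<lambda>x. real_of_int (f x)) \<in> borel_measurable M"
  then have "(\<lambda>x. floor (real_of_int (f x))) \<in> M \<rightarrow>\<^sub>M count_space UNIV"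
    by (rule measurable_compose) (rule measurable_real_floor)
  then show "f \<in> M \<rightarrow>\<^sub>M count_space UNIV" by simp
qed

locale setting2 = setting +
  fixes c :: "'a::polish_space \<Rightarrow> int"
  assumes cU: "is_cocycle M T U c"
    and aper: "AE x in M. \<forall>k\<ge>1. (T ^^ k) x \<noteq> x"
begin

lemma c_meas[measurable]: "c \<in> M \<rightarrow>\<^sub>M count_space UNIV"
  using cU unfolding is_cocycle_def by simp

lemma cocycle_uniq:
  assumes "is_cocycle M T V c1" "is_cocycle M T V c2"
  shows "AE x in M. c1 x = c2 x"
proof -
  have "AE x in M. V x = tpow M T (c1 x) x" "AE x in M. V x = tpow M T (c2 x) x"
    using assms unfolding is_cocycle_def by auto
  with aper show ?thesis
  proof eventually_elim
    case (elim x)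
    show ?case
    proof (rule ccontr)
      assume ne: "c1 x \<noteq> c2 x"
      have "tpow M T (c1 x - c2 x) x = tpow M T (- c2 x) (tpow M T (c1 x) x)"
        using tpow_add[of "- c2 x" "c1 x" x] by simp
      also have "\<dots> = tpow M T (- c2 x) (tpow M T (c2 x) x)" using elim by simp
      also have "\<dots> = x" using tpow_add[of "- c2 x" "c2 x" x] by (simp add: tpow_eq)
      finally obtain n where "n \<ge> 1" "(T ^^ n) x = x" using tpow_periodic ne by fastforce
      then show False using elim by auto
    qed
  qed
qed

lemma cocycle_AE:
  assumes "is_cocycle M T V c1"
  shows "AE x in M. cocycle M T V x = c1 x"
proof -
  have "is_cocycle M T V (cocycle M T V)"
    unfolding cocycle_def using someI[of "is_cocycle M T V" c1] assms by simp
  then show ?thesis using cocycle_uniq assms by blast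
qed

definition ret :: "'a set \<Rightarrow> 'a \<Rightarrow> nat" where
  "ret B x = (if x \<in> B \<and> (\<exists>n\<ge>1. (U ^^ n) x \<in> B) then LEAST n. n \<ge> 1 \<and> (U ^^ n) x \<in> B else 0)"

lemma first_return_ret: "first_return U B x = (U ^^ ret B x) x"
  unfolding first_return_def ret_def by auto

lemma ret_meas[measurable]:
  assumes [measurable]: "B \<in> sets M"
  shows "ret B \<in> M \<rightarrow>\<^sub>M count_space UNIV"
proof -
  have [measurable]: "(U ^^ n) \<in> M \<rightarrow>\<^sub>M M" for n using Un(1) .
  have [measurable]: "Measurable.pred M (\<lambda>x. (U ^^ n) x \<in> B)" for n by measurable
  show ?thesis unfolding ret_def by measurable
qed

definition csum :: "nat \<Rightarrow> 'a \<Rightarrow> int" where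
  "csum n x = (\<Sum>i<n. c ((U ^^ i) x))"

lemma csum_meas[measurable]: "csum n \<in> M \<rightarrow>\<^sub>M count_space UNIV"
proof -
  have "(\<lambda>x. real_of_int (c ((U ^^ i) x))) \<in> borel_measurable M" for i
    using measurable_compose[OF Un(1) c_meas] by (simp add: int_meas_iff)
  then have "(\<lambda>x. \<Sum>i<n. real_of_int (c ((U ^^ i) x))) \<in> borel_measurable M"
    by (rule borel_measurable_sum)
  then show ?thesis unfolding csum_def int_meas_iff by simp
qed

lemma csum_AE: "AE x in M. \<forall>n. (U ^^ n) x = tpow M T (csum n x) x"
proof -
  have "AE x in M. U x = tpow M T (c x) x" using cU unfolding is_cocycle_def by auto
  then have "AE x in M. U ((U ^^ i) x) = tpow M T (c ((U ^^ i) x)) ((U ^^ i) x)" for i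
    using AE_mp[OF Un] by blast
  then have "AE x in M. \<forall>i. U ((U ^^ i) x) = tpow M T (c ((U ^^ i) x)) ((U ^^ i) x)"
    by (simp add: AE_all_countable)
  then show ?thesis
  proof eventually_elim
    case (elim x)
    show ?case
    proof
      fix n show "(U ^^ n) x = tpow M T (csum n x) x"
      proof (induction n)
        case 0 then show ?case by (simp add: csum_def tpow_eq)
      next
        case (Suc n)
        have "(U ^^ Suc n) x = U ((U ^^ n) x)" by simp
        also have "\<dots> = tpow M T (c ((U ^^ n) x)) (tpow M T (csum n x) x)"
        proof -
          have e: "U ((U ^^ n) x) = tpow M T (c ((U ^^ n) x)) ((U ^^ n) x)" using elim by blast
          show ?thesis using e Suc.IH by metis
        qed
        also have "\<dots> = tpow M T (csum (Suc n) x) x"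
          by (simp add: csum_def tpow_add[symmetric] add.commute)
        finally show ?case .
      qed
    qed
  qed
qed

definition cret :: "'a set \<Rightarrow> 'a \<Rightarrow> int" where
  "cret B x = csum (ret B x) x"

lemma cret_cocycle:
  assumes [measurable]: "B \<in> sets M"
  shows "is_cocycle M T (first_return U B) (cret B)"
  unfolding is_cocycle_def
proof
  have "(\<lambda>x. csum (ret B x) x) \<in> M \<rightarrow>\<^sub>M count_space UNIV"
    by (rule measurable_compose_countable'[where I=UNIV]) auto
  then show "cret B \<in> M \<rightarrow>\<^sub>M count_space UNIV" unfolding cret_def .
  show "AE x in M. first_return U B x = tpow M T (cret B x) x"
    using csum_AE by eventually_elim (simp add: first_return_ret cret_def)
qed

lemma cocycle_fr: "B \<in> sets M \<Longrightarrow> AE x in M. cocycle M T (first_return U B) x = cret B x"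
  using cocycle_AE[OF cret_cocycle] .

end

lemma ennreal_trunc_le:
  fixes f h :: ennreal and K :: nat
  assumes "h \<le> 1"
  shows "f * h \<le> (f - of_nat K) + of_nat K * h"
proof (cases "f \<le> of_nat K")
  case True
  then have "f * h \<le> of_nat K * h" by (intro mult_right_mono) auto
  then show ?thesis by (simp add: add_increasing)
next
  case False
  then have f: "f = (f - of_nat K) + of_nat K"
    using ennreal_ineq_diff_add[of "of_nat K" f] by (simp add: add.commute)
  have "f * h = (f - of_nat K) * h + of_nat K * h" by (subst f) (simp add: distrib_right)
  also have "\<dots> \<le> (f - of_nat K) * 1 + of_nat K * h" using assms by (intro add_mono mult_left_mono) auto
  finally show ?thesis by simp
qed

lemma tail_tendsto:
  fixes f :: "'a \<Rightarrow> ennreal"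
  assumes f: "f \<in> borel_measurable M" "(\<integral>\<^sup>+x. f x \<partial>M) < \<infinity>"
  shows "(\<lambda>K. \<integral>\<^sup>+x. f x - of_nat K \<partial>M) \<longlonglongrightarrow> 0"
proof -
  define F where "F K x = f x - of_nat K" for K x
  have dec: "decseq F"
    by (rule decseq_SucI) (auto simp: le_fun_def F_def intro!: ennreal_minus_mono)
  have fin: "(\<integral>\<^sup>+ x. F i x \<partial>M) < \<infinity>" for i
    using f(2) by (rule le_less_trans[rotated]) (auto intro!: nn_integral_mono simp: F_def)
  have meas: "F i \<in> borel_measurable M" for i using f(1) unfolding F_def by measurable
  have "(\<integral>\<^sup>+ x. (INF i. F i x) \<partial>M) = (INF i. integral\<^sup>N M (F i))"
    by (rule nn_integral_monotone_convergence_INF_decseq[OF dec meas fin])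
  moreover have "(\<integral>\<^sup>+ x. (INF i. F i x) \<partial>M) = (\<integral>\<^sup>+ x. 0 \<partial>M)"
  proof (rule nn_integral_cong_AE)
    have "AE x in M. f x \<noteq> \<infinity>" using nn_integral_PInf_AE[OF f(1)] f(2) by auto
    then show "AE x in M. (INF i. F i x) = 0"
    proof eventually_elim
      case (elim x)
      then obtain r where r: "0 \<le> r" "f x = ennreal r" by (cases "f x") auto
      have "(INF i. F i x) \<le> F (nat \<lceil>r\<rceil>) x" by (rule INF_lower) simp
      also have "\<dots> = 0" unfolding F_def r(2)
        using r(1) by (simp add: ennreal_of_nat_eq_real_of_nat diff_eq_0_iff_ennreal ennreal_leI)
      finally show ?case by simp
    qed
  qed
  ultimately have "(INF i. integral\<^sup>N M (F i)) = 0" by simp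
  moreover have "decseq (\<lambda>i. integral\<^sup>N M (F i))"
    using dec unfolding decseq_def by (auto intro!: nn_integral_mono simp: le_fun_def)
  ultimately show ?thesis using LIMSEQ_INF unfolding F_def by metis
qed

lemma AC_ennreal:
  fixes f :: "'a \<Rightarrow> ennreal" and h :: "nat \<Rightarrow> 'a \<Rightarrow> ennreal"
  assumes f: "f \<in> borel_measurable M" "(\<integral>\<^sup>+x. f x \<partial>M) < \<infinity>"
    and hm: "\<And>n. h n \<in> borel_measurable M" and h1: "\<And>n x. h n x \<le> 1"
    and lim: "(\<lambda>n. \<integral>\<^sup>+x. h n x \<partial>M) \<longlonglongrightarrow> 0"
  shows "(\<lambda>n. \<integral>\<^sup>+x. f x * h n x \<partial>M) \<longlonglongrightarrow> 0"
proof (rule order_tendstoI)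
  fix a :: ennreal assume "a < 0" then show "eventually (\<lambda>n. a < \<integral>\<^sup>+x. f x * h n x \<partial>M) sequentially"
    by simp
next
  fix e :: ennreal assume e: "0 < e"
  have bnd: "(\<integral>\<^sup>+x. f x * h n x \<partial>M) \<le> (\<integral>\<^sup>+x. f x - of_nat K \<partial>M) + of_nat K * (\<integral>\<^sup>+x. h n x \<partial>M)" for n K
  proof -
    have "(\<integral>\<^sup>+x. f x * h n x \<partial>M) \<le> (\<integral>\<^sup>+x. (f x - of_nat K) + of_nat K * h n x \<partial>M)"
      by (intro nn_integral_mono ennreal_trunc_le h1)
    also have "\<dots> = (\<integral>\<^sup>+x. f x - of_nat K \<partial>M) + of_nat K * (\<integral>\<^sup>+x. h n x \<partial>M)"
      using f(1) hm by (simp add: nn_integral_add nn_integral_cmult)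
    finally show ?thesis .
  qed
  show "eventually (\<lambda>n. (\<integral>\<^sup>+x. f x * h n x \<partial>M) < e) sequentially"
  proof (cases e)
    case top
    have "(\<integral>\<^sup>+x. f x * h n x \<partial>M) \<le> (\<integral>\<^sup>+x. f x \<partial>M)" for n
      using h1 by (intro nn_integral_mono) (metis mult.right_neutral mult_left_mono zero_le)
    then have "(\<integral>\<^sup>+x. f x * h n x \<partial>M) < e" for n using top f(2) by (auto intro: le_less_trans)
    then show ?thesis by simp
  next
    case (real r)
    then have r: "r > 0" using e by simp
    have "ennreal (r/2) > 0" using r by simp
    from order_tendstoD(2)[OF tail_tendsto[OF f] this]
    obtain K where K: "(\<integral>\<^sup>+x. f x - of_nat K \<partial>M) < ennreal (r/2)"
      by (auto simp: eventually_sequentially)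
    have "(\<lambda>n. of_nat K * (\<integral>\<^sup>+x. h n x \<partial>M)) \<longlonglongrightarrow> of_nat K * 0"
      by (rule ennreal_tendsto_cmult[OF _ lim]) (metis ennreal_of_nat_eq_real_of_nat ennreal_less_top less_irrefl)
    then have "eventually (\<lambda>n. of_nat K * (\<integral>\<^sup>+x. h n x \<partial>M) < ennreal (r/2)) sequentially"
      using \<open>ennreal (r/2) > 0\<close> by (intro order_tendstoD(2)) auto
    then show ?thesis
    proof eventually_elim
      case (elim n)
      have "(\<integral>\<^sup>+x. f x * h n x \<partial>M) < ennreal (r/2) + ennreal (r/2)"
        using bnd[of n K] K elim by (meson add_strict_mono order.strict_trans1)
      also have "\<dots> = e" using r real by (simp flip: ennreal_plus)
      finally show ?case .
    qed
  qed
qed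

context setting begin

lemma transport:
  fixes f g :: "'a \<Rightarrow> ennreal"
  assumes [measurable]: "f \<in> borel_measurable M" "g \<in> borel_measurable M"
  shows "(\<integral>\<^sup>+ x. f x * g ((U ^^ i) x) \<partial>M) = (\<integral>\<^sup>+ y. f ((inv U ^^ i) y) * g y \<partial>M)"
proof -
  have [measurable]: "(U ^^ i) \<in> M \<rightarrow>\<^sub>M M" by (rule Un(1))
  have Fm: "(\<lambda>y. f ((inv U ^^ i) y) * g y) \<in> borel_measurable M" by measurable
  have "(\<integral>\<^sup>+ y. f ((inv U ^^ i) y) * g y \<partial>M) = (\<integral>\<^sup>+ y. f ((inv U ^^ i) y) * g y \<partial>distr M M (U ^^ i))"
    by (simp add: Un(2))
  also have "\<dots> = (\<integral>\<^sup>+ x. f ((inv U ^^ i) ((U ^^ i) x)) * g ((U ^^ i) x) \<partial>M)"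
    by (rule nn_integral_distr) (auto simp: Un(2) Fm)
  also have "\<dots> = (\<integral>\<^sup>+ x. f x * g ((U ^^ i) x) \<partial>M)" by simp
  finally show ?thesis by simp
qed

definition tower_disj :: "(nat \<Rightarrow> 'a set) \<Rightarrow> bool" where
  "tower_disj Q \<longleftrightarrow> (\<forall>i j x y. i < j \<longrightarrow> x \<in> Q i \<longrightarrow> y \<in> Q j \<longrightarrow> (U ^^ i) x \<noteq> (U ^^ j) y)"

lemma tower_count_le1:
  assumes "tower_disj Q"
  shows "(\<Sum>i. indicator (Q i) ((inv U ^^ i) y) :: ennreal) \<le> 1"
proof (cases "\<exists>i. (inv U ^^ i) y \<in> Q i")
  case False
  then show ?thesis by (simp add: indicator_def)
next
  case True
  then obtain i0 where i0: "(inv U ^^ i0) y \<in> Q i0" by blast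
  have "(inv U ^^ j) y \<notin> Q j" if "j \<noteq> i0" for j
  proof
    assume j: "(inv U ^^ j) y \<in> Q j"
    have e: "(U ^^ j) ((inv U ^^ j) y) = (U ^^ i0) ((inv U ^^ i0) y)" by simp
    show False
    proof (cases "j < i0")
      case True then show ?thesis using assms j i0 e unfolding tower_disj_def by blast
    next
      case False then have "i0 < j" using that by simp
      then show ?thesis using assms j i0 e unfolding tower_disj_def by metis
    qed
  qed
  then have "(\<Sum>i. indicator (Q i) ((inv U ^^ i) y) :: ennreal) = (\<Sum>i\<in>{i0}. indicator (Q i) ((inv U ^^ i) y))"
    by (intro suminf_finite) (auto simp: indicator_def)
  then show ?thesis by (simp only: sum.insert_if finite.emptyI sum.empty empty_iff if_False add_0_right) (simp split: split_indicator)
qed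

lemma tower_sum:
  fixes g :: "'a \<Rightarrow> ennreal"
  assumes [measurable]: "\<And>i. Q i \<in> sets M" "g \<in> borel_measurable M"
  shows "(\<Sum>i. \<integral>\<^sup>+ x. indicator (Q i) x * g ((U ^^ i) x) \<partial>M)
     = (\<integral>\<^sup>+ y. (\<Sum>i. indicator (Q i) ((inv U ^^ i) y)) * g y \<partial>M)"
proof -
  have "(\<Sum>i. \<integral>\<^sup>+ x. indicator (Q i) x * g ((U ^^ i) x) \<partial>M)
     = (\<Sum>i. \<integral>\<^sup>+ y. indicator (Q i) ((inv U ^^ i) y) * g y \<partial>M)"
    by (subst transport) auto
  also have "\<dots> = (\<integral>\<^sup>+ y. (\<Sum>i. indicator (Q i) ((inv U ^^ i) y) * g y) \<partial>M)"
    by (rule nn_integral_suminf[symmetric]) measurable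
  also have "\<dots> = (\<integral>\<^sup>+ y. (\<Sum>i. indicator (Q i) ((inv U ^^ i) y)) * g y \<partial>M)"
    by (simp add: ennreal_suminf_multc)
  finally show ?thesis .
qed

lemma tower_measure:
  assumes [measurable]: "\<And>i. Q i \<in> sets M" and "tower_disj Q"
  shows "(\<Sum>i. emeasure M (Q i)) \<le> 1"
proof -
  have "(\<Sum>i. emeasure M (Q i)) = (\<Sum>i. \<integral>\<^sup>+ x. indicator (Q i) x * (\<lambda>_. 1) ((U ^^ i) x) \<partial>M)"
    by simp
  also have "\<dots> = (\<integral>\<^sup>+ y. (\<Sum>i. indicator (Q i) ((inv U ^^ i) y)) * 1 \<partial>M)"
    by (rule tower_sum) auto
  also have "\<dots> \<le> (\<integral>\<^sup>+ y. 1 \<partial>M)"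
    using tower_count_le1[OF assms(2)] by (intro nn_integral_mono) simp
  also have "\<dots> = 1" using prob_space.emeasure_space_1[OF prob] by simp
  finally show ?thesis .
qed

lemma poincare:
  assumes [measurable]: "B \<in> sets M"
  shows "AE x in M. x \<in> B \<longrightarrow> (\<exists>n\<ge>1. (U ^^ n) x \<in> B)"
proof -
  interpret prob_space M by (rule prob)
  define W where "W = {x\<in>B. \<forall>n\<ge>1. (U ^^ n) x \<notin> B}"
  have [measurable]: "(U ^^ n) \<in> M \<rightarrow>\<^sub>M M" for n by (rule Un(1))
  have Wm[measurable]: "W \<in> sets M" unfolding W_def by measurable
  have td: "tower_disj (\<lambda>_. W)" unfolding tower_disj_def
  proof (intro allI impI notI)
    fix i j x y assume ij: "i < j" and x: "x \<in> W" and y: "y \<in> W" and e: "(U ^^ i) x = (U ^^ j) y"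
    have "(U ^^ j) y = (U ^^ i) ((U ^^ (j - i)) y)" using ij
      by (metis funpow_add le_add_diff_inverse less_imp_le o_apply)
    then have "x = (U ^^ (j - i)) y" using e by (metis Uinv_pow1)
    then show False using x y ij unfolding W_def by auto
  qed
  have "(\<Sum>i. emeasure M W) \<le> 1" using tower_measure[OF Wm td] .
  then have le: "real N * measure M W \<le> 1" for N
  proof -
    have "(\<Sum>i<N. emeasure M W) \<le> (\<Sum>i. emeasure M W)" by (intro sum_le_suminf) auto
    also have "\<dots> \<le> 1" by fact
    finally have "ennreal (real N * measure M W) \<le> 1"
      by (simp add: emeasure_eq_measure ennreal_of_nat_eq_real_of_nat ennreal_mult')
    then show ?thesis by (simp add: ennreal_le_1)
  qed
  have "measure M W = 0"
  proof (rule ccontr)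
    assume "measure M W \<noteq> 0"
    then have "measure M W > 0" using measure_nonneg[of M W] by linarith
    then obtain N where "1 < real N * measure M W"
      using ex_less_of_nat_mult by blast
    with le[of N] show False by simp
  qed
  then have "W \<in> null_sets M" by (simp add: emeasure_eq_measure null_sets_def)
  then show ?thesis by (rule AE_I') (auto simp: W_def)
qed

end

lemma phi_nonneg: "metric_compatible \<phi> \<Longrightarrow> 0 \<le> t \<Longrightarrow> 0 \<le> \<phi> t"
  unfolding metric_compatible_def by (metis order_refl)

lemma phi_sum:
  assumes mc: "metric_compatible \<phi>" and "finite I"
  shows "\<phi> \<bar>real_of_int (\<Sum>i\<in>I. a i)\<bar> \<le> (\<Sum>i\<in>I. \<phi> \<bar>real_of_int (a i)\<bar>)"
proof -
  have mono: "\<And>s t. 0 \<le> s \<Longrightarrow> s \<le> t \<Longrightarrow> \<phi> s \<le> \<phi> t"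
    and sub: "\<And>s t. 0 \<le> s \<Longrightarrow> 0 \<le> t \<Longrightarrow> \<phi> (s + t) \<le> \<phi> s + \<phi> t" and z: "\<phi> 0 = 0"
    using mc unfolding metric_compatible_def by auto
  have "\<phi> (\<Sum>i\<in>I. \<bar>real_of_int (a i)\<bar>) \<le> (\<Sum>i\<in>I. \<phi> \<bar>real_of_int (a i)\<bar>)"
    using assms(2)
  proof (induction I rule: finite_induct)
    case empty then show ?case by (simp add: z)
  next
    case (insert i I)
    have "\<phi> (\<Sum>i\<in>insert i I. \<bar>real_of_int (a i)\<bar>) = \<phi> (\<bar>real_of_int (a i)\<bar> + (\<Sum>i\<in>I. \<bar>real_of_int (a i)\<bar>))"
      using insert by simp
    also have "\<dots> \<le> \<phi> \<bar>real_of_int (a i)\<bar> + \<phi> (\<Sum>i\<in>I. \<bar>real_of_int (a i)\<bar>)"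
      by (intro sub) (auto intro: sum_nonneg)
    also have "\<dots> \<le> \<phi> \<bar>real_of_int (a i)\<bar> + (\<Sum>i\<in>I. \<phi> \<bar>real_of_int (a i)\<bar>)" using insert by simp
    finally show ?case using insert by simp
  qed
  moreover have "\<phi> \<bar>real_of_int (\<Sum>i\<in>I. a i)\<bar> \<le> \<phi> (\<Sum>i\<in>I. \<bar>real_of_int (a i)\<bar>)"
    by (intro mono) (auto simp: sum_abs)
  ultimately show ?thesis by linarith
qed

context setting2 begin

lemma ret_pos_iff: "ret B x > 0 \<longleftrightarrow> x \<in> B \<and> (\<exists>n\<ge>1. (U ^^ n) x \<in> B)"
proof
  assume "ret B x > 0"
  then show "x \<in> B \<and> (\<exists>n\<ge>1. (U ^^ n) x \<in> B)" unfolding ret_def by (auto split: if_splits)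
next
  assume h: "x \<in> B \<and> (\<exists>n\<ge>1. (U ^^ n) x \<in> B)"
  then obtain n where "n \<ge> 1" "(U ^^ n) x \<in> B" by blast
  then have "(LEAST n. n \<ge> 1 \<and> (U ^^ n) x \<in> B) \<ge> 1" by (metis (mono_tags, lifting) LeastI)
  then show "ret B x > 0" using h unfolding ret_def by auto
qed

lemma ret_props:
  assumes "ret B x > 0"
  shows "x \<in> B" "ret B x \<ge> 1" "(U ^^ ret B x) x \<in> B"
    "\<And>m. 1 \<le> m \<Longrightarrow> m < ret B x \<Longrightarrow> (U ^^ m) x \<notin> B"
    "\<And>n. 1 \<le> n \<Longrightarrow> (U ^^ n) x \<in> B \<Longrightarrow> ret B x \<le> n"
proof -
  have h: "x \<in> B \<and> (\<exists>n\<ge>1. (U ^^ n) x \<in> B)" using assms ret_pos_iff by blast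
  then have r: "ret B x = (LEAST n. n \<ge> 1 \<and> (U ^^ n) x \<in> B)" unfolding ret_def by simp
  from h obtain n0 where n0: "n0 \<ge> 1" "(U ^^ n0) x \<in> B" by blast
  show "x \<in> B" using h by simp
  show "ret B x \<ge> 1" "(U ^^ ret B x) x \<in> B" unfolding r using n0 by (metis (mono_tags, lifting) LeastI)+
  show "(U ^^ m) x \<notin> B" if "1 \<le> m" "m < ret B x" for m
    using that not_less_Least unfolding r by blast
  show "ret B x \<le> n" if "1 \<le> n" "(U ^^ n) x \<in> B" for n
    unfolding r using that by (simp add: Least_le)
qed

lemma ret_zero: "ret B x = 0 \<Longrightarrow> cret B x = 0"
  unfolding cret_def csum_def by simp

definition QQ :: "'a set \<Rightarrow> 'a set \<Rightarrow> nat \<Rightarrow> 'a set" where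
  "QQ A B i = {x \<in> A - B. \<forall>m. 1 \<le> m \<longrightarrow> m \<le> i \<longrightarrow> (U ^^ m) x \<notin> A}"

definition RR :: "'a set \<Rightarrow> 'a set \<Rightarrow> nat \<Rightarrow> 'a set" where
  "RR A B i = {x \<in> B. ret A x \<le> i \<and> i < ret B x}"

lemma sum_to_suminf:
  fixes f :: "nat \<Rightarrow> ennreal"
  assumes "finite I"
  shows "sum f I \<le> suminf f"
  by (rule sum_le_suminf) (auto simp: assms)

lemma pointwise:
  fixes \<phi> :: "real \<Rightarrow> real"
  assumes mc: "metric_compatible \<phi>" and BA: "B \<subseteq> A"
    and ret: "x \<in> B \<longrightarrow> (\<exists>n\<ge>1. (U ^^ n) x \<in> B)"
  shows "ennreal (\<phi> \<bar>real_of_int (cret B x - cret A x)\<bar>) \<le>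
    (\<Sum>i. indicator (QQ A B i) x * ennreal (\<phi> \<bar>real_of_int (c ((U ^^ i) x))\<bar>)) +
    (\<Sum>i. indicator (RR A B i) x * ennreal (\<phi> \<bar>real_of_int (c ((U ^^ i) x))\<bar>))"
    (is "?L \<le> ?S1 + ?S2")
proof -
  define g where "g i = \<phi> \<bar>real_of_int (c ((U ^^ i) x))\<bar>" for i
  have g0: "0 \<le> g i" for i unfolding g_def using phi_nonneg[OF mc] by simp
  have z: "\<phi> 0 = 0" using mc unfolding metric_compatible_def by simp
  consider "x \<in> B" | "x \<in> A - B" | "x \<notin> A" using BA by blast
  then show ?thesis
  proof cases
    case 1
    define s where "s = ret B x"
    have sp: "s > 0" unfolding s_def using ret 1 ret_pos_iff by blast
    note S = ret_props[OF sp[unfolded s_def], folded s_def]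
    have rp: "ret A x > 0" using ret_pos_iff S(1,2,3) BA by blast
    define r where "r = ret A x"
    note R = ret_props[OF rp, folded r_def]
    have rs: "r \<le> s" using R(5)[OF S(2)] S(3) BA by auto
    have "cret B x = cret A x + (\<Sum>i\<in>{r..<s}. c ((U ^^ i) x))"
      unfolding cret_def csum_def s_def[symmetric] r_def[symmetric]
      using rs by (metis sum.atLeastLessThan_concat lessThan_atLeast0 zero_le)
    then have "?L = ennreal (\<phi> \<bar>real_of_int (\<Sum>i\<in>{r..<s}. c ((U ^^ i) x))\<bar>)" by simp
    also have "\<dots> \<le> ennreal (\<Sum>i\<in>{r..<s}. g i)"
      unfolding g_def by (intro ennreal_leI phi_sum[OF mc]) simp
    also have "\<dots> = (\<Sum>i\<in>{r..<s}. ennreal (g i))" using g0 by simp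
    also have "\<dots> = (\<Sum>i\<in>{r..<s}. indicator (RR A B i) x * ennreal (g i))"
    proof (intro sum.cong refl)
      fix i assume "i \<in> {r..<s}"
      then have "x \<in> RR A B i" unfolding RR_def r_def s_def using 1 by auto
      then show "ennreal (g i) = indicator (RR A B i) x * ennreal (g i)" by simp
    qed
    also have "\<dots> \<le> ?S2" unfolding g_def by (rule sum_to_suminf) simp
    also have "\<dots> \<le> ?S1 + ?S2" by (simp add: add_increasing)
    finally show ?thesis .
  next
    case 2
    have "ret B x = 0" using 2 ret_pos_iff by blast
    then have cb: "cret B x = 0" by (rule ret_zero)
    define r where "r = ret A x"
    have "?L = ennreal (\<phi> \<bar>real_of_int (\<Sum>i<r. c ((U ^^ i) x))\<bar>)"
      unfolding cb unfolding cret_def csum_def r_def by simp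
    also have "\<dots> \<le> ennreal (\<Sum>i<r. g i)"
      unfolding g_def by (intro ennreal_leI phi_sum[OF mc]) simp
    also have "\<dots> = (\<Sum>i<r. ennreal (g i))" using g0 by simp
    also have "\<dots> = (\<Sum>i<r. indicator (QQ A B i) x * ennreal (g i))"
    proof (intro sum.cong refl)
      fix i assume i: "i \<in> {..<r}"
      then have rp: "ret A x > 0" unfolding r_def by simp
      have "x \<in> QQ A B i" unfolding QQ_def using 2 i ret_props(4)[OF rp] unfolding r_def by auto
      then show "ennreal (g i) = indicator (QQ A B i) x * ennreal (g i)" by simp
    qed
    also have "\<dots> \<le> ?S1" unfolding g_def by (rule sum_to_suminf) simp
    also have "\<dots> \<le> ?S1 + ?S2" by (simp add: add_increasing2)
    finally show ?thesis .
  next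
    case 3
    then have "ret A x = 0" "ret B x = 0" using ret_pos_iff BA by blast+
    then have "cret A x = 0" "cret B x = 0" by (auto intro: ret_zero)
    then show ?thesis by (simp add: z)
  qed
qed

end

context setting2 begin

lemma shift_eq:
  assumes "i < j" "(U ^^ i) x = (U ^^ j) y"
  shows "x = (U ^^ (j - i)) y"
proof -
  have "(U ^^ j) y = (U ^^ i) ((U ^^ (j - i)) y)" using assms(1)
    by (metis funpow_add le_add_diff_inverse less_imp_le o_apply)
  then show ?thesis using assms(2) by (metis Uinv_pow1)
qed

lemma QQ_disj: "tower_disj (QQ A B)"
  unfolding tower_disj_def
proof (intro allI impI notI)
  fix i j x y assume ij: "i < j" and x: "x \<in> QQ A B i" and y: "y \<in> QQ A B j" and e: "(U ^^ i) x = (U ^^ j) y"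
  have "x = (U ^^ (j - i)) y" by (rule shift_eq[OF ij e])
  then show False using x y ij unfolding QQ_def by auto
qed

lemma RR_disj: "tower_disj (RR A B)"
  unfolding tower_disj_def
proof (intro allI impI notI)
  fix i j x y assume ij: "i < j" and x: "x \<in> RR A B i" and y: "y \<in> RR A B j" and e: "(U ^^ i) x = (U ^^ j) y"
  have xe: "x = (U ^^ (j - i)) y" by (rule shift_eq[OF ij e])
  have yr: "j < ret B y" using y unfolding RR_def by auto
  then have "ret B y > 0" by simp
  from ret_props(4)[OF this, of "j - i"] ij yr have "(U ^^ (j - i)) y \<notin> B" by auto
  then show False using x xe unfolding RR_def by auto
qed

lemma QQ_meas[measurable]: "A \<in> sets M \<Longrightarrow> B \<in> sets M \<Longrightarrow> QQ A B i \<in> sets M"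
proof -
  assume [measurable]: "A \<in> sets M" "B \<in> sets M"
  have [measurable]: "(U ^^ n) \<in> M \<rightarrow>\<^sub>M M" for n by (rule Un(1))
  show ?thesis unfolding QQ_def by measurable
qed

lemma RR_meas[measurable]: "A \<in> sets M \<Longrightarrow> B \<in> sets M \<Longrightarrow> RR A B i \<in> sets M"
proof -
  assume [measurable]: "A \<in> sets M" "B \<in> sets M"
  show ?thesis unfolding RR_def by measurable
qed

lemma RR_QQ:
  assumes BA: "B \<subseteq> A" and xR: "(inv U ^^ i) y \<in> RR A B i"
  shows "\<exists>j. (inv U ^^ j) y \<in> QQ A B j"
proof -
  define x where "x = (inv U ^^ i) y"
  have yx: "y = (U ^^ i) x" unfolding x_def by simp
  have xB: "x \<in> B" and ri: "ret A x \<le> i" and iS: "i < ret B x" using xR unfolding RR_def x_def by auto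
  have sp: "ret B x > 0" using iS by simp
  note S = ret_props[OF sp]
  have rp: "ret A x > 0" using ret_pos_iff S(1,2,3) BA by blast
  note R = ret_props[OF rp]
  define K where "K = {k. k \<le> i \<and> (U ^^ k) x \<in> A}"
  have Kf: "finite K" unfolding K_def by simp
  have rK: "ret A x \<in> K" unfolding K_def using ri R(3) by simp
  define j0 where "j0 = Max K"
  have j0K: "j0 \<in> K" unfolding j0_def using Kf rK by (intro Max_in) auto
  have rj0: "ret A x \<le> j0" unfolding j0_def using Kf rK by simp
  have j0i: "j0 \<le> i" and j0A: "(U ^^ j0) x \<in> A" using j0K unfolding K_def by auto
  have j0B: "(U ^^ j0) x \<notin> B" using S(4)[of j0] rj0 R(2) j0i iS by auto
  define x' where "x' = (U ^^ j0) x"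
  have "x' \<in> QQ A B (i - j0)"
    unfolding QQ_def
  proof (intro CollectI conjI allI impI)
    show "x' \<in> A - B" using j0A j0B unfolding x'_def by simp
    fix m assume m: "1 \<le> m" "m \<le> i - j0"
    have "(U ^^ m) x' = (U ^^ (m + j0)) x" unfolding x'_def by (simp add: funpow_add)
    moreover have "m + j0 \<notin> K"
    proof
      assume "m + j0 \<in> K"
      then have "m + j0 \<le> j0" unfolding j0_def using Kf by (rule Max_ge[rotated])
      then show False using m by simp
    qed
    ultimately show "(U ^^ m) x' \<notin> A" using m unfolding K_def by auto
  qed
  moreover have "(inv U ^^ (i - j0)) y = x'"
  proof -
    have "y = (U ^^ (i - j0)) x'" unfolding yx x'_def using j0i
      by (metis funpow_add le_add_diff_inverse2 o_apply)
    then show ?thesis by simp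
  qed
  ultimately show ?thesis by auto
qed

lemma HR_le_HQ:
  assumes BA: "B \<subseteq> A"
  shows "(\<Sum>i. indicator (RR A B i) ((inv U ^^ i) y) :: ennreal) \<le> (\<Sum>i. indicator (QQ A B i) ((inv U ^^ i) y))"
proof (cases "\<exists>i. (inv U ^^ i) y \<in> RR A B i")
  case False then show ?thesis by (simp add: indicator_def)
next
  case True
  then obtain i where "(inv U ^^ i) y \<in> RR A B i" by blast
  from RR_QQ[OF BA this] obtain j where j: "(inv U ^^ j) y \<in> QQ A B j" by blast
  have "(\<Sum>i. indicator (RR A B i) ((inv U ^^ i) y) :: ennreal) \<le> 1" by (rule tower_count_le1[OF RR_disj])
  also have "\<dots> = (\<Sum>i\<in>{j}. indicator (QQ A B i) ((inv U ^^ i) y))" using j by simp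
  also have "\<dots> \<le> (\<Sum>i. indicator (QQ A B i) ((inv U ^^ i) y))" by (rule sum_to_suminf) simp
  finally show ?thesis .
qed

end

context setting2 begin

lemma G_meas[measurable]: "(\<lambda>y. ennreal (\<phi> \<bar>real_of_int (c y)\<bar>)) \<in> borel_measurable M"
  by (rule measurable_compose[OF c_meas]) (simp add: measurable_count_space_eq1)

lemma integral_bound:
  fixes \<phi> :: "real \<Rightarrow> real"
  assumes mc: "metric_compatible \<phi>" and [measurable]: "A \<in> sets M" "B \<in> sets M" and BA: "B \<subseteq> A"
  shows "(\<integral>\<^sup>+x. ennreal (\<phi> \<bar>real_of_int (cret B x - cret A x)\<bar>) \<partial>M) \<le>
    (\<integral>\<^sup>+y. (\<Sum>i. indicator (QQ A B i) ((inv U ^^ i) y)) * ennreal (\<phi> \<bar>real_of_int (c y)\<bar>) \<partial>M) +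
    (\<integral>\<^sup>+y. (\<Sum>i. indicator (QQ A B i) ((inv U ^^ i) y)) * ennreal (\<phi> \<bar>real_of_int (c y)\<bar>) \<partial>M)"
proof -
  define G where "G y = ennreal (\<phi> \<bar>real_of_int (c y)\<bar>)" for y
  have Gm[measurable]: "G \<in> borel_measurable M" unfolding G_def by simp
  have [measurable]: "(U ^^ n) \<in> M \<rightarrow>\<^sub>M M" for n by (rule Un(1))
  define S1 where "S1 x = (\<Sum>i. indicator (QQ A B i) x * G ((U ^^ i) x))" for x
  define S2 where "S2 x = (\<Sum>i. indicator (RR A B i) x * G ((U ^^ i) x))" for x
  have S1m[measurable]: "S1 \<in> borel_measurable M" unfolding S1_def by measurable
  have S2m[measurable]: "S2 \<in> borel_measurable M" unfolding S2_def by measurable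
  have "(\<integral>\<^sup>+x. ennreal (\<phi> \<bar>real_of_int (cret B x - cret A x)\<bar>) \<partial>M) \<le> (\<integral>\<^sup>+x. S1 x + S2 x \<partial>M)"
  proof (rule nn_integral_mono_AE)
    show "AE x in M. ennreal (\<phi> \<bar>real_of_int (cret B x - cret A x)\<bar>) \<le> S1 x + S2 x"
      using poincare[of B, OF assms(3)]
    proof eventually_elim
      case (elim x)
      show ?case unfolding S1_def S2_def G_def by (rule pointwise[OF mc BA elim])
    qed
  qed
  also have "\<dots> = (\<integral>\<^sup>+x. S1 x \<partial>M) + (\<integral>\<^sup>+x. S2 x \<partial>M)" by (rule nn_integral_add) simp_all
  also have "(\<integral>\<^sup>+x. S1 x \<partial>M) = (\<integral>\<^sup>+y. (\<Sum>i. indicator (QQ A B i) ((inv U ^^ i) y)) * G y \<partial>M)"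
    unfolding S1_def by (subst nn_integral_suminf) (measurable, rule tower_sum, simp_all)
  also have "(\<integral>\<^sup>+x. S2 x \<partial>M) = (\<integral>\<^sup>+y. (\<Sum>i. indicator (RR A B i) ((inv U ^^ i) y)) * G y \<partial>M)"
    unfolding S2_def by (subst nn_integral_suminf) (measurable, rule tower_sum, simp_all)
  also have "\<dots> \<le> (\<integral>\<^sup>+y. (\<Sum>i. indicator (QQ A B i) ((inv U ^^ i) y)) * G y \<partial>M)"
    by (intro nn_integral_mono mult_right_mono HR_le_HQ[OF BA]) simp
  finally show ?thesis unfolding G_def by (simp add: add_left_mono)
qed

end

context setting2 begin

lemma QQ_empty: "QQ A B i = QQ A {} i \<inter> (A - B)"
  unfolding QQ_def by auto

lemma main_limit:
  fixes \<phi> :: "real \<Rightarrow> real"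
  assumes mc: "metric_compatible \<phi>"
    and Gfin: "(\<integral>\<^sup>+y. ennreal (\<phi> \<bar>real_of_int (c y)\<bar>) \<partial>M) < \<infinity>"
    and [measurable]: "A \<in> sets M" "\<And>n. An n \<in> sets M" and sub: "\<And>n. An n \<subseteq> A"
    and lim: "(\<lambda>n. measure M (A - An n)) \<longlonglongrightarrow> 0"
  shows "(\<lambda>n. \<integral>\<^sup>+x. ennreal (\<phi> \<bar>real_of_int (cret (An n) x - cret A x)\<bar>) \<partial>M) \<longlonglongrightarrow> 0"
proof -
  define G where "G y = ennreal (\<phi> \<bar>real_of_int (c y)\<bar>)" for y
  have Gm[measurable]: "G \<in> borel_measurable M" unfolding G_def by simp
  define H where "H n y = (\<Sum>i. indicator (QQ A (An n) i) ((inv U ^^ i) y) :: ennreal)" for n y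
  have Hm[measurable]: "H n \<in> borel_measurable M" for n unfolding H_def by measurable
  have H1: "H n y \<le> 1" for n y unfolding H_def by (rule tower_count_le1[OF QQ_disj])
  define \<rho> where "\<rho> x = (\<Sum>i. indicator (QQ A {} i) x :: ennreal)" for x
  have \<rho>m[measurable]: "\<rho> \<in> borel_measurable M" unfolding \<rho>_def by measurable
  have "(\<integral>\<^sup>+x. \<rho> x \<partial>M) = (\<Sum>i. emeasure M (QQ A {} i))"
    unfolding \<rho>_def by (subst nn_integral_suminf) auto
  also have "\<dots> \<le> 1" by (rule tower_measure[OF _ QQ_disj]) simp
  finally have \<rho>fin: "(\<integral>\<^sup>+x. \<rho> x \<partial>M) < \<infinity>" by (simp add: le_less_trans)
  have Hint: "(\<integral>\<^sup>+y. H n y \<partial>M) = (\<integral>\<^sup>+x. \<rho> x * indicator (A - An n) x \<partial>M)" for n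
  proof -
    have "(\<integral>\<^sup>+y. H n y \<partial>M) = (\<integral>\<^sup>+y. H n y * 1 \<partial>M)" by simp
    also have "\<dots> = (\<Sum>i. \<integral>\<^sup>+ x. indicator (QQ A (An n) i) x * (\<lambda>_. 1) ((U ^^ i) x) \<partial>M)"
      unfolding H_def by (rule tower_sum[symmetric]) auto
    also have "\<dots> = (\<Sum>i. \<integral>\<^sup>+ x. indicator (QQ A {} i) x * indicator (A - An n) x \<partial>M)"
      by (subst QQ_empty) (simp add: indicator_inter_arith)
    also have "\<dots> = (\<integral>\<^sup>+ x. (\<Sum>i. indicator (QQ A {} i) x * indicator (A - An n) x) \<partial>M)"
      by (rule nn_integral_suminf[symmetric]) measurable
    also have "\<dots> = (\<integral>\<^sup>+x. \<rho> x * indicator (A - An n) x \<partial>M)"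
      unfolding \<rho>_def by simp
    finally show ?thesis .
  qed
  have "(\<lambda>n. \<integral>\<^sup>+x. indicator (A - An n) x \<partial>M) \<longlonglongrightarrow> 0"
  proof -
    have "(\<lambda>n. ennreal (measure M (A - An n))) \<longlonglongrightarrow> ennreal 0"
      by (rule tendsto_ennrealI[OF lim])
    moreover have "(\<integral>\<^sup>+x. indicator (A - An n) x \<partial>M) = ennreal (measure M (A - An n))" for n
      using finite_measure.emeasure_eq_measure[OF prob_space.axioms(1)[OF prob]] by simp
    ultimately show ?thesis by simp
  qed
  then have "(\<lambda>n. \<integral>\<^sup>+x. \<rho> x * indicator (A - An n) x \<partial>M) \<longlonglongrightarrow> 0"
    by (intro AC_ennreal[OF \<rho>m \<rho>fin]) (auto simp: indicator_def)
  then have "(\<lambda>n. \<integral>\<^sup>+y. H n y \<partial>M) \<longlonglongrightarrow> 0" by (simp add: Hint)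
  then have "(\<lambda>n. \<integral>\<^sup>+y. G y * H n y \<partial>M) \<longlonglongrightarrow> 0"
    by (intro AC_ennreal[OF Gm] H1) (use Gfin in \<open>auto simp: G_def\<close>)
  then have "(\<lambda>n. (\<integral>\<^sup>+y. H n y * G y \<partial>M) + (\<integral>\<^sup>+y. H n y * G y \<partial>M)) \<longlonglongrightarrow> 0 + 0"
    by (intro tendsto_add) (simp_all add: mult.commute)
  then have up: "(\<lambda>n. (\<integral>\<^sup>+y. H n y * G y \<partial>M) + (\<integral>\<^sup>+y. H n y * G y \<partial>M)) \<longlonglongrightarrow> 0" by simp
  have ev1: "\<forall>\<^sub>F n in sequentially. 0 \<le> \<integral>\<^sup>+x. ennreal (\<phi> \<bar>real_of_int (cret (An n) x - cret A x)\<bar>) \<partial>M"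
    by simp
  have ev2: "\<forall>\<^sub>F n in sequentially. (\<integral>\<^sup>+x. ennreal (\<phi> \<bar>real_of_int (cret (An n) x - cret A x)\<bar>) \<partial>M)
       \<le> (\<integral>\<^sup>+y. H n y * G y \<partial>M) + (\<integral>\<^sup>+y. H n y * G y \<partial>M)"
    using integral_bound[OF mc _ _ sub] unfolding H_def G_def by simp
  show ?thesis by (rule tendsto_sandwich[OF ev1 ev2 tendsto_const up])
qed

end

theorem mainTheorem15:
  fixes M :: "('a::polish_space) measure" and \<phi> :: "real \<Rightarrow> real"
    and T U :: "'a \<Rightarrow> 'a" and A :: "'a set" and An :: "nat \<Rightarrow> 'a set"
  assumes "std_atomless_prob M"
    and "metric_compatible \<phi>"
    and "ergodic_aut M T"
    and "U \<in> full_group_phi M \<phi> T"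
    and "A \<in> sets M"
    and "\<And>n. An n \<in> sets M" and "\<And>n. An n \<subseteq> A"
    and "(\<lambda>n. measure M (A - An n)) \<longlonglongrightarrow> 0"
  shows "(\<lambda>n. d_phi M \<phi> T (first_return U (An n)) (first_return U A)) \<longlonglongrightarrow> 0"
proof -
  have pM: "prob_space M" and sM: "sets M = sets borel" and atom: "\<And>x. emeasure M {x} = 0"
    using assms(1) unfolding std_atomless_prob_def by auto
  have mT: "mp_aut M T" using assms(3) unfolding ergodic_aut_def by simp
  have Ufg: "U \<in> full_group M T" and Ufin: "(\<integral>\<^sup>+ x. ennreal (\<phi> \<bar>real_of_int (cocycle M T U x)\<bar>) \<partial>M) < \<infinity>"
    using assms(4) unfolding full_group_phi_def by auto
  have mU: "mp_aut M U" and ex: "\<exists>c. is_cocycle M T U c" using Ufg unfolding full_group_def by auto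
  interpret setting M T U by (rule setting.intro[OF pM sM mT mU])
  have cc: "is_cocycle M T U (cocycle M T U)" unfolding cocycle_def using ex by (rule someI_ex)
  have ap: "AE x in M. \<forall>k\<ge>1. (T ^^ k) x \<noteq> x" by (rule AE_aperiodic[OF assms(3) atom])
  interpret s2: setting2 M T U "cocycle M T U"
    by (rule setting2.intro[OF setting.intro[OF pM sM mT mU] setting2_axioms.intro[OF cc ap]])
  have eq: "d_phi M \<phi> T (first_return U (An n)) (first_return U A)
     = (\<integral>\<^sup>+x. ennreal (\<phi> \<bar>real_of_int (s2.cret (An n) x - s2.cret A x)\<bar>) \<partial>M)" for n
    unfolding d_phi_def
  proof (rule nn_integral_cong_AE)
    show "AE x in M. ennreal (\<phi> \<bar>real_of_int (cocycle M T (first_return U (An n)) x - cocycle M T (first_return U A) x)\<bar>)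
       = ennreal (\<phi> \<bar>real_of_int (s2.cret (An n) x - s2.cret A x)\<bar>)"
      using s2.cocycle_fr[OF assms(6)[of n]] s2.cocycle_fr[OF assms(5)] by eventually_elim simp
  qed
  show ?thesis unfolding eq
    by (rule s2.main_limit[OF assms(2) Ufin assms(5,6,7,8)])
qed

end
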